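(* Let $\mathcal{R}$ be a left-linear, left-finite TRS and suppose $s$ strongly $p$-converges to $t$ in $\mathcal{R}$. Then for each finite set $P$ of non-$\bot$ positions of $t$, there is a finite reduction $s\to^* t'$ in $\mathcal{R}$ such that $t$ and $t'$ coincide in $P$ (i.e. $t(\pi)=t'(\pi)$ for all $\pi\in P$).
   Context: Left-finite = all left-hand sides finite. Partial terms over $\Sigma_\bot=\Sigma\uplus\{\bot\}$ ordered by $\le_\bot$ (replacing subterms by $\bot$) form a complete semilattice; $\liminf_{\iota\to\alpha}a_\iota=\bigvee_{\beta<\alpha}\bigwedge_{\beta\le\iota<\alpha}a_\iota$. A reduction $(t_\iota\to_{\pi_\iota}t_{\iota+1})_{\iota<\alpha}$ with contexts $c_\iota$ ($t_\iota$ with position $\pi_\iota$ replaced by $\bot$) strongly $p$-converges to $t$ if $\liminf_{\iota\to\lambda}c_\iota=t_\lambda$ for every limit $\lambda<\alpha$ and $t$ is the last term (closed) or $t=\liminf_{\iota\to\alpha}c_\iota$ (open). *)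

theory Defs
  imports Main
begin

datatype ('f, 'v) lab = Fun 'f | Var 'v | Bot

type_synonym pos = "nat list"

type_synonym ('f, 'v) pterm = "pos \<Rightarrow> ('f, 'v) lab option"

definition wf_pterm :: "('f \<Rightarrow> nat) \<Rightarrow> ('f, 'v) pterm \<Rightarrow> bool" where
  "wf_pterm ar t \<longleftrightarrow> t [] \<noteq> None \<and>
     (\<forall>p i. t (p @ [i]) \<noteq> None \<longleftrightarrow> (\<exists>f. t p = Some (Fun f) \<and> i < ar f))"

definition total :: "('f, 'v) pterm \<Rightarrow> bool" where
  "total t \<longleftrightarrow> (\<forall>p. t p \<noteq> Some Bot)"

definition vars_of :: "('f, 'v) pterm \<Rightarrow> 'v set" where
  "vars_of t = {x. \<exists>p. t p = Some (Var x)}"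

definition subt :: "('f, 'v) pterm \<Rightarrow> pos \<Rightarrow> ('f, 'v) pterm" where
  "subt t p = (\<lambda>q. t (p @ q))"

definition repl :: "('f, 'v) pterm \<Rightarrow> pos \<Rightarrow> ('f, 'v) pterm \<Rightarrow> ('f, 'v) pterm" where
  "repl t p u = (\<lambda>q. if \<exists>q2. q = p @ q2 then u (drop (length p) q) else t q)"

definition bot_term :: "('f, 'v) pterm" where
  "bot_term = (\<lambda>q. if q = [] then Some Bot else None)"

definition ctx :: "('f, 'v) pterm \<Rightarrow> pos \<Rightarrow> ('f, 'v) pterm" where
  "ctx t p = repl t p bot_term"

definition var_prefix :: "('f, 'v) pterm \<Rightarrow> pos \<Rightarrow> (pos \<times> 'v) option" where
  "var_prefix l q = (if \<exists>q1 q2 x. q = q1 @ q2 \<and> l q1 = Some (Var x)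
      then Some (SOME (q1, x). \<exists>q2. q = q1 @ q2 \<and> l q1 = Some (Var x)) else None)"

definition subst :: "('v \<Rightarrow> ('f, 'v) pterm) \<Rightarrow> ('f, 'v) pterm \<Rightarrow> ('f, 'v) pterm" where
  "subst \<sigma> l = (\<lambda>q. case var_prefix l q of
      None \<Rightarrow> l q
    | Some (q1, x) \<Rightarrow> \<sigma> x (drop (length q1) q))"

definition trs :: "('f \<Rightarrow> nat) \<Rightarrow> (('f, 'v) pterm \<times> ('f, 'v) pterm) set \<Rightarrow> bool" where
  "trs ar R \<longleftrightarrow> (\<forall>(l, r) \<in> R. wf_pterm ar l \<and> wf_pterm ar r \<and> total l \<and> total r \<and>
      (\<forall>x. l [] \<noteq> Some (Var x)) \<and> vars_of r \<subseteq> vars_of l)"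

definition left_linear :: "(('f, 'v) pterm \<times> ('f, 'v) pterm) set \<Rightarrow> bool" where
  "left_linear R \<longleftrightarrow> (\<forall>(l, r) \<in> R. \<forall>p p' x.
      l p = Some (Var x) \<and> l p' = Some (Var x) \<longrightarrow> p = p')"

definition left_finite :: "(('f, 'v) pterm \<times> ('f, 'v) pterm) set \<Rightarrow> bool" where
  "left_finite R \<longleftrightarrow> (\<forall>(l, r) \<in> R. finite {p. l p \<noteq> None})"

definition rstep_at :: "('f \<Rightarrow> nat) \<Rightarrow> (('f, 'v) pterm \<times> ('f, 'v) pterm) set \<Rightarrow> pos \<Rightarrow>
    ('f, 'v) pterm \<Rightarrow> ('f, 'v) pterm \<Rightarrow> bool" where
  "rstep_at ar R p t t' \<longleftrightarrow> (\<exists>l r \<sigma>. (l, r) \<in> R \<and> (\<forall>x. wf_pterm ar (\<sigma> x)) \<and>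
      t p \<noteq> None \<and> subt t p = subst \<sigma> l \<and> t' = repl t p (subst \<sigma> r))"

definition rstep :: "('f \<Rightarrow> nat) \<Rightarrow> (('f, 'v) pterm \<times> ('f, 'v) pterm) set \<Rightarrow>
    ('f, 'v) pterm \<Rightarrow> ('f, 'v) pterm \<Rightarrow> bool" where
  "rstep ar R t t' \<longleftrightarrow> (\<exists>p. rstep_at ar R p t t')"

definition le_bot :: "('f, 'v) pterm \<Rightarrow> ('f, 'v) pterm \<Rightarrow> bool" where
  "le_bot s t \<longleftrightarrow> (\<forall>p. s p \<noteq> None \<longrightarrow> t p \<noteq> None) \<and>
      (\<forall>p a. s p = Some a \<and> a \<noteq> Bot \<longrightarrow> t p = Some a)"

definition is_glb :: "('f \<Rightarrow> nat) \<Rightarrow> ('f, 'v) pterm set \<Rightarrow> ('f, 'v) pterm \<Rightarrow> bool" where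
  "is_glb ar A g \<longleftrightarrow> wf_pterm ar g \<and> (\<forall>a\<in>A. le_bot g a) \<and>
      (\<forall>h. wf_pterm ar h \<and> (\<forall>a\<in>A. le_bot h a) \<longrightarrow> le_bot h g)"

definition is_lub :: "('f \<Rightarrow> nat) \<Rightarrow> ('f, 'v) pterm set \<Rightarrow> ('f, 'v) pterm \<Rightarrow> bool" where
  "is_lub ar A g \<longleftrightarrow> wf_pterm ar g \<and> (\<forall>a\<in>A. le_bot a g) \<and>
      (\<forall>h. wf_pterm ar h \<and> (\<forall>a\<in>A. le_bot a h) \<longrightarrow> le_bot g h)"

text \<open>Ordinals are elements of a well-ordered type.\<close>
definition liminf_is :: "('f \<Rightarrow> nat) \<Rightarrow> ('i::wellorder \<Rightarrow> ('f, 'v) pterm) \<Rightarrow> 'i \<Rightarrow> ('f, 'v) pterm \<Rightarrow> bool" where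
  "liminf_is ar a lam x \<longleftrightarrow>
     is_lub ar {g. \<exists>\<beta><lam. is_glb ar {a i | i. \<beta> \<le> i \<and> i < lam} g} x"

definition osuc :: "'i::wellorder \<Rightarrow> 'i" where
  "osuc i = (LEAST j. i < j)"

definition ozero :: "'i::wellorder" where
  "ozero = (LEAST j. True)"

definition is_limit :: "'i::wellorder \<Rightarrow> bool" where
  "is_limit lam \<longleftrightarrow> (\<exists>i. i < lam) \<and> (\<forall>i<lam. \<exists>j. i < j \<and> j < lam)"

text \<open>It strongly p-converges to
  \<open>t\<close> iff at every limit \<open>\<lambda> \<le> \<alpha>\<close> the term \<open>ts \<lambda>\<close> is the liminf of the contexts,
  and \<open>t = ts \<alpha>\<close> (the last term if \<open>\<alpha>\<close> is zero or a successor, the liminf of the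
  contexts if \<open>\<alpha>\<close> is a limit).\<close>
definition strongly_p_converges ::
  "('f \<Rightarrow> nat) \<Rightarrow> (('f, 'v) pterm \<times> ('f, 'v) pterm) set \<Rightarrow>
   'i::wellorder \<Rightarrow> ('i \<Rightarrow> ('f, 'v) pterm) \<Rightarrow> ('i \<Rightarrow> pos) \<Rightarrow>
   ('f, 'v) pterm \<Rightarrow> ('f, 'v) pterm \<Rightarrow> bool" where
  "strongly_p_converges ar R \<alpha> ts ps s t \<longleftrightarrow>
     ts ozero = s \<and>
     (\<forall>i\<le>\<alpha>. wf_pterm ar (ts i)) \<and>
     (\<forall>i<\<alpha>. rstep_at ar R (ps i) (ts i) (ts (osuc i))) \<and>
     (\<forall>lam\<le>\<alpha>. is_limit lam \<longrightarrow> liminf_is ar (\<lambda>i. ctx (ts i) (ps i)) lam (ts lam)) \<and>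
     t = ts \<alpha>"

end

theory Submission
  imports Defs
begin

lemma wf_child: "wf_pterm ar t \<Longrightarrow> t (p@[i]) \<noteq> None \<longleftrightarrow> (\<exists>f. t p = Some (Fun f) \<and> i < ar f)"
  by (simp add: wf_pterm_def)

lemma wf_root: "wf_pterm ar t \<Longrightarrow> t [] \<noteq> None"
  by (simp add: wf_pterm_def)

lemma wf_prefix: "wf_pterm ar t \<Longrightarrow> t (q @ j # rest) \<noteq> None \<Longrightarrow> \<exists>f. t q = Some (Fun f) \<and> j < ar f"
proof (induction rest arbitrary: rule: rev_induct)
  case Nil then show ?case using wf_child[of ar t q j] by simp
next
  case (snoc k rest)
  have "t ((q @ j # rest) @ [k]) \<noteq> None" using snoc by simp
  then obtain f where "t (q @ j # rest) = Some (Fun f)" using wf_child[OF snoc(2), of "q @ j # rest" k] by blast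
  then have "t (q @ j # rest) \<noteq> None" by simp
  then show ?case using snoc by blast
qed

lemma vp_unique:
  assumes "wf_pterm ar l" "l q1 = Some (Var x)" "l q1' = Some (Var x')" "q1@q2 = q1'@q2'"
  shows "q1 = q1' \<and> x = x'"
proof -
  from assms(4) obtain us where "q1 = q1'@us \<and> us@q2 = q2' \<or> q1@us = q1' \<and> q2 = us@q2'"
    by (auto simp: append_eq_append_conv2)
  then show ?thesis
  proof
    assume h: "q1 = q1'@us \<and> us@q2 = q2'"
    show ?thesis
    proof (cases us)
      case Nil then show ?thesis using h assms by simp
    next
      case (Cons j rest)
      then have "l (q1' @ j # rest) \<noteq> None" using h assms by simp
      then show ?thesis using wf_prefix[OF assms(1)] assms(3) by fastforce
    qed
  next
    assume h: "q1@us = q1' \<and> q2 = us@q2'"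
    show ?thesis
    proof (cases us)
      case Nil then show ?thesis using h assms by simp
    next
      case (Cons j rest)
      then have "l (q1 @ j # rest) \<noteq> None" using h assms by auto
      then show ?thesis using wf_prefix[OF assms(1)] assms(2) by fastforce
    qed
  qed
qed

lemma vp_char:
  assumes "wf_pterm ar l" "l q1 = Some (Var x)"
  shows "var_prefix l (q1@q2) = Some (q1,x)"
proof -
  have ex: "\<exists>q1' q2' x'. q1@q2 = q1' @ q2' \<and> l q1' = Some (Var x')" using assms by blast
  have "(SOME (a, b). \<exists>q2'. q1@q2 = a @ q2' \<and> l a = Some (Var b)) = (q1, x)"
  proof (rule someI2[where a="(q1,x)"])
    show "case (q1, x) of (a, b) \<Rightarrow> \<exists>q2'. q1 @ q2 = a @ q2' \<and> l a = Some (Var b)" using assms by auto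
  next
    fix y assume "case y of (a, b) \<Rightarrow> \<exists>q2'. q1 @ q2 = a @ q2' \<and> l a = Some (Var b)"
    then obtain a b q2' where "y = (a,b)" "q1@q2 = a@q2'" "l a = Some (Var b)" by auto
    then show "y = (q1,x)" using vp_unique[OF assms(1) assms(2), of a b q2 q2'] by auto
  qed
  then show ?thesis using ex unfolding var_prefix_def by simp
qed

lemma vp_None: "var_prefix l q = None \<longleftrightarrow> \<not>(\<exists>q1 q2 x. q = q1@q2 \<and> l q1 = Some (Var x))"
proof -
  have "var_prefix l q = None \<Longrightarrow> \<not>(\<exists>q1 q2 x. q = q1@q2 \<and> l q1 = Some (Var x))"
    unfolding var_prefix_def by (cases "\<exists>q1 q2 x. q = q1@q2 \<and> l q1 = Some (Var x)") simp_all
  moreover have "\<not>(\<exists>q1 q2 x. q = q1@q2 \<and> l q1 = Some (Var x)) \<Longrightarrow> var_prefix l q = None"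
    unfolding var_prefix_def by simp
  ultimately show ?thesis by blast
qed

lemma vp_Some: assumes "var_prefix l q = Some (q1,x)" shows "\<exists>q2. q = q1@q2 \<and> l q1 = Some (Var x)"
proof -
  have "var_prefix l q \<noteq> None" using assms by simp
  then have ex: "\<exists>q1 q2 x. q = q1@q2 \<and> l q1 = Some (Var x)" using vp_None[of l q] by simp
  then obtain a b c where abc: "q = a@b" "l a = Some (Var c)" by blast
  let ?P = "\<lambda>y. case y of (a, b) \<Rightarrow> \<exists>q2. q = a @ q2 \<and> l a = Some (Var b)"
  have e2: "?P (a,c)" using abc by simp
  have eq: "(SOME (a, b). \<exists>q2. q = a @ q2 \<and> l a = Some (Var b)) = (q1,x)"
    using assms ex unfolding var_prefix_def by (simp only: if_True option.inject)
  have "?P (SOME y. ?P y)" using someI[of ?P, OF e2] .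
  then have "?P (q1,x)" using eq by (simp only: split_def)
  then show ?thesis by simp
qed

lemma subst_vp: "var_prefix l q = Some (q1,x) \<Longrightarrow> subst \<sigma> l q = \<sigma> x (drop (length q1) q)"
  by (simp add: subst_def)

lemma subst_novp: "var_prefix l q = None \<Longrightarrow> subst \<sigma> l q = l q"
  by (simp add: subst_def)

lemma wf_subst:
  assumes wl: "wf_pterm ar l" and ws: "\<And>x. wf_pterm ar (\<sigma> x)"
  shows "wf_pterm ar (subst \<sigma> l)"
  unfolding wf_pterm_def
proof (intro conjI allI)
  show "subst \<sigma> l [] \<noteq> None"
  proof (cases "var_prefix l []")
    case None then show ?thesis using wf_root[OF wl] by (simp add: subst_novp)
  next
    case (Some a) then obtain q1 x where a: "var_prefix l [] = Some (q1,x)" by (cases a) auto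
    then have "q1 = []" using vp_Some[OF a] by simp
    then show ?thesis using a wf_root[OF ws[of x]] by (simp add: subst_vp)
  qed
next
  fix p i
  show "(subst \<sigma> l (p @ [i]) \<noteq> None) = (\<exists>f. subst \<sigma> l p = Some (Fun f) \<and> i < ar f)"
  proof (cases "var_prefix l p")
    case (Some a) then obtain q1 x where a: "var_prefix l p = Some (q1,x)" by (cases a) auto
    then obtain q2 where q: "p = q1@q2" "l q1 = Some (Var x)" using vp_Some[OF a] by blast
    then have "var_prefix l (p@[i]) = Some (q1,x)" using vp_char[OF wl, of q1 x "q2@[i]"] by simp
    then show ?thesis using a q wf_child[OF ws[of x], of q2 i] by (simp add: subst_vp)
  next
    case None
    show ?thesis
    proof (cases "var_prefix l (p@[i])")
      case None2: None
      then show ?thesis using None wf_child[OF wl, of p i] by (simp add: subst_novp)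
    next
      case (Some a) then obtain q1 x where a: "var_prefix l (p@[i]) = Some (q1,x)" by (cases a) auto
      then obtain q2 where q: "p@[i] = q1@q2" "l q1 = Some (Var x)" using vp_Some[OF a] by blast
      show ?thesis
      proof (cases q2 rule: rev_cases)
        case Nil
        then have "l (p@[i]) \<noteq> None" using q by simp
        then show ?thesis using a q Nil None wf_root[OF ws[of x]] wf_child[OF wl, of p i]
          by (simp add: subst_vp subst_novp)
      next
        case (snoc ys y)
        then have "p = q1@ys" using q by simp
        have "\<not>(\<exists>q1 q2 x. p = q1@q2 \<and> l q1 = Some (Var x))" using None vp_None[of l p] by simp
        then show ?thesis using \<open>p = q1@ys\<close> q(2) by blast
      qed
    qed
  qed
qed

lemma wf_repl:
  assumes wt: "wf_pterm ar t" and tp: "t p \<noteq> None" and wu: "wf_pterm ar u"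
  shows "wf_pterm ar (repl t p u)"
  unfolding wf_pterm_def
proof (intro conjI allI)
  show "repl t p u [] \<noteq> None" using wf_root[OF wt] wf_root[OF wu] by (auto simp: repl_def)
next
  fix q i
  show "(repl t p u (q @ [i]) \<noteq> None) = (\<exists>f. repl t p u q = Some (Fun f) \<and> i < ar f)"
  proof (cases "\<exists>q2. q = p@q2")
    case True
    then obtain q2 where q: "q = p@q2" by blast
    then have "\<exists>q3. q@[i] = p@q3" by simp
    then show ?thesis using q wf_child[OF wu, of q2 i] by (simp add: repl_def)
  next
    case False
    show ?thesis
    proof (cases "\<exists>q2. q@[i] = p@q2")
      case True
      then obtain q2 where q2: "q@[i] = p@q2" by blast
      have "q2 = []"
      proof (rule ccontr)
        assume "q2 \<noteq> []" then obtain ys y where "q2 = ys@[y]" by (cases q2 rule: rev_cases) auto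
        then have "q = p@ys" using q2 by simp
        then show False using False by blast
      qed
      then have "p = q@[i]" using q2 by simp
      then show ?thesis using False True tp wf_root[OF wu] wf_child[OF wt, of q i]
        by (auto simp: repl_def)
    next
      case F2: False
      then show ?thesis using False wf_child[OF wt, of q i] by (simp add: repl_def)
    qed
  qed
qed

lemma wf_subt: "wf_pterm ar t \<Longrightarrow> t p \<noteq> None \<Longrightarrow> wf_pterm ar (subt t p)"
  unfolding wf_pterm_def subt_def by (metis append.assoc append_Nil2)

lemma wf_bot: "wf_pterm ar bot_term"
  unfolding wf_pterm_def bot_term_def by auto

lemma rstep_wf:
  assumes "trs ar R" "rstep_at ar R p t t'" "wf_pterm ar t"
  shows "wf_pterm ar t'"
proof -
  obtain l r \<sigma> where h: "(l, r) \<in> R" "\<forall>x. wf_pterm ar (\<sigma> x)" "t p \<noteq> None"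
     "t' = repl t p (subst \<sigma> r)" using assms(2) unfolding rstep_at_def by blast
  have "wf_pterm ar r" using assms(1) h(1) unfolding trs_def by auto
  then show ?thesis using h assms(3) wf_repl wf_subst by metis
qed

lemma ctx_val: "ctx t q \<pi> = Some a \<Longrightarrow> a \<noteq> Bot \<Longrightarrow> t \<pi> = Some a"
  unfolding ctx_def repl_def bot_term_def by (auto split: if_splits)

lemma limit_lemma:
  assumes li: "liminf_is ar c lam x" and xa: "x \<pi> = Some a" and ab: "a \<noteq> Bot"
  shows "\<exists>\<beta><lam. \<forall>i. \<beta> \<le> i \<and> i < lam \<longrightarrow> c i \<pi> = Some a"
proof -
  define G where "G = {g. \<exists>\<beta><lam. is_glb ar {c i |i. \<beta> \<le> i \<and> i < lam} g}"
  have wfx: "wf_pterm ar x" and ub: "\<forall>g\<in>G. le_bot g x"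
    and least: "\<forall>h. wf_pterm ar h \<and> (\<forall>g\<in>G. le_bot g h) \<longrightarrow> le_bot x h"
    using li unfolding liminf_is_def is_lub_def G_def by auto
  have "\<exists>g\<in>G. g \<pi> = Some a"
  proof (rule ccontr)
    assume nex: "\<not> (\<exists>g\<in>G. g \<pi> = Some a)"
    define h where "h = ctx x \<pi>"
    have wh: "wf_pterm ar h" unfolding h_def ctx_def using wf_repl[OF wfx _ wf_bot] xa by simp
    have "le_bot g h" if gG: "g \<in> G" for g
    proof -
      have wg: "wf_pterm ar g" using gG unfolding G_def is_glb_def by auto
      have gx: "le_bot g x" using ub gG by auto
      have gpa: "g \<pi> \<noteq> Some a" using nex gG by auto
      have ext: "p = \<pi> \<and> g \<pi> = Some Bot" if th: "p = \<pi>@q2" "g p \<noteq> None" for p q2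
      proof (cases q2)
        case Nil
        then obtain b where b: "g \<pi> = Some b" using th by auto
        have "b = Bot"
        proof (rule ccontr)
          assume "b \<noteq> Bot" then have "x \<pi> = Some b" using gx b unfolding le_bot_def by auto
          then show False using xa b gpa by simp
        qed
        then show ?thesis using Nil th b by simp
      next
        case (Cons j rest)
        then obtain f where "g \<pi> = Some (Fun f)" using wf_prefix[OF wg] th by blast
        then have "x \<pi> = Some (Fun f)" using gx unfolding le_bot_def by auto
        then show ?thesis using gpa xa \<open>g \<pi> = Some (Fun f)\<close> by simp
      qed
      show ?thesis unfolding le_bot_def
      proof (intro conjI allI impI)
        fix p assume gp: "g p \<noteq> None"
        show "h p \<noteq> None"
        proof (cases "\<exists>q2. p = \<pi>@q2")
          case True then show ?thesis using ext gp unfolding h_def ctx_def repl_def bot_term_def by auto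
        next
          case False then show ?thesis using gp gx unfolding h_def ctx_def repl_def le_bot_def by auto
        qed
      next
        fix p b assume gp: "g p = Some b \<and> b \<noteq> Bot"
        show "h p = Some b"
        proof (cases "\<exists>q2. p = \<pi>@q2")
          case True then show ?thesis using ext gp by fastforce
        next
          case False then show ?thesis using gp gx unfolding h_def ctx_def repl_def le_bot_def by auto
        qed
      qed
    qed
    then have "le_bot x h" using least wh by auto
    then have "h \<pi> = Some a" using xa ab unfolding le_bot_def by auto
    moreover have "h \<pi> = Some Bot" unfolding h_def ctx_def repl_def bot_term_def by auto
    ultimately show False using ab by simp
  qed
  then obtain g \<beta> where g: "g \<pi> = Some a" "\<beta> < lam" "is_glb ar {c i |i. \<beta> \<le> i \<and> i < lam} g"
    unfolding G_def by auto
  have "c i \<pi> = Some a" if "\<beta> \<le> i" "i < lam" for i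
  proof -
    have "le_bot g (c i)" using g(3) that unfolding is_glb_def by blast
    then show ?thesis using g(1) ab unfolding le_bot_def by auto
  qed
  then show ?thesis using g(2) by blast
qed

lemma classify: "(\<gamma>::'i::wellorder) = ozero \<or> (\<exists>\<delta><\<gamma>. \<gamma> = osuc \<delta>) \<or> is_limit \<gamma>"
proof (cases "\<exists>i. i < \<gamma>")
  case False
  have "ozero \<le> \<gamma>" unfolding ozero_def by (rule Least_le) simp
  then show ?thesis using False by (metis order.not_eq_order_implies_strict)
next
  case True
  show ?thesis
  proof (cases "\<forall>i<\<gamma>. \<exists>j. i < j \<and> j < \<gamma>")
    case True2: True then show ?thesis using True unfolding is_limit_def by blast
  next
    case False
    then obtain i where i: "i < \<gamma>" "\<forall>j. \<not> (i < j \<and> j < \<gamma>)" by blast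
    have "i < osuc i" unfolding osuc_def by (rule LeastI[of _ \<gamma>]) (rule i(1))
    moreover have "osuc i \<le> \<gamma>" unfolding osuc_def by (rule Least_le) (rule i(1))
    ultimately have "osuc i = \<gamma>" using i(2) by (metis order.not_eq_order_implies_strict)
    then show ?thesis using i by blast
  qed
qed

lemma ozero_le: "ozero \<le> (x::'i::wellorder)"
  unfolding ozero_def by (rule Least_le) simp

lemma step_lemma:
  assumes trs: "trs ar R" and ll: "left_linear R" and lf: "left_finite R"
    and wt0: "wf_pterm ar t0" and st: "rstep_at ar R p t0 t1"
    and fP: "finite P" and nb: "\<forall>\<pi>\<in>P. t1 \<pi> \<noteq> None \<and> t1 \<pi> \<noteq> Some Bot"
  shows "\<exists>Q. finite Q \<and> (\<forall>\<pi>\<in>Q. t0 \<pi> \<noteq> None \<and> t0 \<pi> \<noteq> Some Bot) \<and>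
    (\<forall>t'. wf_pterm ar t' \<and> (\<forall>\<pi>\<in>Q. t' \<pi> = t0 \<pi>) \<longrightarrow>
       (\<exists>t''. rstep ar R t' t'' \<and> wf_pterm ar t'' \<and> (\<forall>\<pi>\<in>P. t'' \<pi> = t1 \<pi>)))"
proof -
  obtain l r \<sigma> where h: "(l, r) \<in> R" "\<forall>x. wf_pterm ar (\<sigma> x)" "t0 p \<noteq> None"
     "subt t0 p = subst \<sigma> l" "t1 = repl t0 p (subst \<sigma> r)" using st unfolding rstep_at_def by blast
  have wl: "wf_pterm ar l" and wr: "wf_pterm ar r" and tl: "total l"
    and lnv: "\<forall>x. l [] \<noteq> Some (Var x)" and vrl: "vars_of r \<subseteq> vars_of l"
    using trs h(1) unfolding trs_def by auto
  have lin: "\<And>q q' x. l q = Some (Var x) \<Longrightarrow> l q' = Some (Var x) \<Longrightarrow> q = q'"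
    using ll h(1) unfolding left_linear_def by blast
  have fl: "finite {q. l q \<noteq> None}" using lf h(1) unfolding left_finite_def by auto
  have t0l: "\<And>q. t0 (p@q) = subst \<sigma> l q" using h(4) unfolding subt_def by metis
  define pos_of where "pos_of x = (SOME q. l q = Some (Var x))" for x
  have pos_of: "l (pos_of x) = Some (Var x)" if "x \<in> vars_of l" for x
    using that unfolding vars_of_def pos_of_def by (auto intro: someI_ex)
  define F where "F \<pi> = (if \<exists>q. \<pi> = p@q then (case var_prefix r (drop (length p) \<pi>) of None \<Rightarrow> p
      | Some (q1,x) \<Rightarrow> p @ pos_of x @ drop (length q1) (drop (length p) \<pi>)) else \<pi>)" for \<pi>
  define Pat where "Pat = {p@q | q. l q \<noteq> None \<and> (\<forall>x. l q \<noteq> Some (Var x))}"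
  define Q where "Q = F ` P \<union> Pat"
  have patv: "t0 (p@q) = l q \<and> l q \<noteq> Some Bot" if "l q \<noteq> None" "\<forall>x. l q \<noteq> Some (Var x)" for q
  proof -
    have "var_prefix l q = None"
    proof (rule ccontr)
      assume "var_prefix l q \<noteq> None"
      then have "\<exists>q1 q2 x. q = q1@q2 \<and> l q1 = Some (Var x)" using vp_None[of l q] by simp
      then obtain q1 q2 x where qq: "q = q1@q2" "l q1 = Some (Var x)" by blast
      show False
      proof (cases q2)
        case Nil then show False using qq that by simp
        next
        case (Cons j rest) then show False using wf_prefix[OF wl, of q1 j rest] qq that by auto
      qed
    qed
    then show ?thesis using t0l[of q] tl unfolding total_def by (simp add: subst_novp)
  qed
  have pPat: "p \<in> Pat" unfolding Pat_def using wf_root[OF wl] lnv by (auto intro!: exI[of _ "[]"])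
  have var_case: "t0 (p @ pos_of x @ q2) = subst \<sigma> r q \<and> x \<in> vars_of l"
    if "var_prefix r q = Some (q1,x)" "q = q1@q2" for q q1 q2 x
  proof -
    have "r q1 = Some (Var x)" using vp_Some[OF that(1)] by auto
    then have xl: "x \<in> vars_of l" using vrl unfolding vars_of_def by auto
    have "t0 (p @ pos_of x @ q2) = \<sigma> x q2"
      using t0l vp_char[OF wl pos_of[OF xl], of q2] by (simp add: subst_vp)
    then show ?thesis using xl that by (simp add: subst_vp)
  qed
  have Fgood: "t0 (F \<pi>) = t1 \<pi> \<or> F \<pi> \<in> Pat" for \<pi>
  proof (cases "\<exists>q. \<pi> = p@q")
    case False then show ?thesis unfolding F_def h(5) repl_def by simp
  next
    case True
    then obtain q where q: "\<pi> = p@q" by blast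
    show ?thesis
    proof (cases "var_prefix r q")
      case None then show ?thesis using q pPat unfolding F_def by simp
    next
      case (Some a) then obtain q1 x where a: "var_prefix r q = Some (q1,x)" by (cases a) auto
      then obtain q2 where "q = q1@q2" using vp_Some[OF a] by blast
      then show ?thesis using var_case[OF a] a q unfolding F_def h(5) repl_def by auto
    qed
  qed
  have finQ: "finite Q"
  proof -
    have "Pat \<subseteq> (\<lambda>q. p@q) ` {q. l q \<noteq> None}" unfolding Pat_def by auto
    then have "finite Pat" using fl finite_subset by blast
    then show ?thesis unfolding Q_def using fP by simp
  qed
  have nbQ: "\<forall>\<pi>\<in>Q. t0 \<pi> \<noteq> None \<and> t0 \<pi> \<noteq> Some Bot"
  proof
    fix \<pi> assume "\<pi> \<in> Q"
    have patnb: "t0 \<sigma>1 \<noteq> None \<and> t0 \<sigma>1 \<noteq> Some Bot" if s1: "\<sigma>1 \<in> Pat" for \<sigma>1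
    proof -
      obtain q where q: "\<sigma>1 = p@q" "l q \<noteq> None" "\<forall>x. l q \<noteq> Some (Var x)" using s1 unfolding Pat_def by blast
      then show ?thesis using patv[OF q(2,3)] by simp
    qed
    have "t0 \<pi> \<noteq> None \<and> t0 \<pi> \<noteq> Some Bot" if "\<pi> \<in> Pat"
      using that patnb by blast
    moreover have "t0 (F \<rho>) \<noteq> None \<and> t0 (F \<rho>) \<noteq> Some Bot" if "\<rho> \<in> P" for \<rho>
      using Fgood[of \<rho>] nb that patnb by metis
    ultimately show "t0 \<pi> \<noteq> None \<and> t0 \<pi> \<noteq> Some Bot" using \<open>\<pi> \<in> Q\<close> unfolding Q_def by auto
  qed
  have main: "\<exists>t''. rstep ar R t' t'' \<and> wf_pterm ar t'' \<and> (\<forall>\<pi>\<in>P. t'' \<pi> = t1 \<pi>)"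
    if wt': "wf_pterm ar t'" and ag: "\<forall>\<pi>\<in>Q. t' \<pi> = t0 \<pi>" for t'
  proof -
    have agP: "t' (p@q) = l q" if "l q \<noteq> None" "\<forall>x. l q \<noteq> Some (Var x)" for q
      using ag patv[OF that] that unfolding Q_def Pat_def by auto
    define \<sigma>' where "\<sigma>' y = (if y \<in> vars_of l then subt t' (p @ pos_of y) else \<sigma> y)" for y
    have ws': "wf_pterm ar (\<sigma>' y)" for y
    proof (cases "y \<in> vars_of l")
      case False then show ?thesis using h(2) unfolding \<sigma>'_def by simp
    next
      case True
      have lp: "l (pos_of y) = Some (Var y)" using pos_of[OF True] .
      then have "pos_of y \<noteq> []" using lnv by auto
      then obtain q0 i where q0: "pos_of y = q0@[i]" by (cases "pos_of y" rule: rev_cases) auto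
      then obtain f where f: "l q0 = Some (Fun f)" "i < ar f" using wf_child[OF wl, of q0 i] lp by auto
      then have "t' (p@q0) = Some (Fun f)" using agP[of q0] by simp
      then have "t' ((p@q0)@[i]) \<noteq> None" using wf_child[OF wt'] f by blast
      then show ?thesis using True q0 wf_subt[OF wt'] unfolding \<sigma>'_def by simp
    qed
    have none: "\<forall>q. var_prefix l q = None \<and> l q = None \<longrightarrow> t' (p@q) = None"
    proof
      fix q show "var_prefix l q = None \<and> l q = None \<longrightarrow> t' (p@q) = None"
      proof (induction q rule: rev_induct)
        case Nil then show ?case using wf_root[OF wl] by auto
      next
        case (snoc i q0)
        show ?case
        proof
          assume a: "var_prefix l (q0 @ [i]) = None \<and> l (q0 @ [i]) = None"
          then have "\<not>(\<exists>q1 q2 x. q0@[i] = q1@q2 \<and> l q1 = Some (Var x))" using vp_None[of l "q0@[i]"] by simp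
          then have nv0: "\<not>(\<exists>q1 q2 x. q0 = q1@q2 \<and> l q1 = Some (Var x))"
          proof (intro notI)
            assume nn: "\<not>(\<exists>q1 q2 x. q0@[i] = q1@q2 \<and> l q1 = Some (Var x))"
              and "\<exists>q1 q2 x. q0 = q1@q2 \<and> l q1 = Some (Var x)"
            then obtain q1 q2 x where "q0 = q1@q2" "l q1 = Some (Var x)" by blast
            then have "q0@[i] = q1@(q2@[i]) \<and> l q1 = Some (Var x)" by simp
            then show False using nn by blast
          qed
          then have v0: "var_prefix l q0 = None" using vp_None[of l q0] by simp
          show "t' (p @ q0 @ [i]) = None"
          proof (cases "l q0 = None")
            case True
            then have "t' (p@q0) = None" using snoc v0 by simp
            then show ?thesis using wf_child[OF wt', of "p@q0" i] by simp
          next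
            case False
            have "\<forall>x. l q0 \<noteq> Some (Var x)"
            proof (intro allI notI)
              fix x assume "l q0 = Some (Var x)"
              then have "q0 = q0@[] \<and> l q0 = Some (Var x)" by simp
              then show False using nv0 by blast
            qed
            then have "t' (p@q0) = l q0" using agP False by simp
            then show ?thesis using wf_child[OF wt', of "p@q0" i] wf_child[OF wl, of q0 i] a by auto
          qed
        qed
      qed
    qed
    have sub: "subt t' p = subst \<sigma>' l"
    proof
      fix q
      show "subt t' p q = subst \<sigma>' l q"
      proof (cases "var_prefix l q")
        case (Some a) then obtain q1 x where a: "var_prefix l q = Some (q1,x)" by (cases a) auto
        then obtain q2 where q: "q = q1@q2" "l q1 = Some (Var x)" using vp_Some[OF a] by blast
        then have xl: "x \<in> vars_of l" unfolding vars_of_def by auto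
        have "pos_of x = q1" using lin[OF pos_of[OF xl] q(2)] .
        then show ?thesis using a q xl unfolding \<sigma>'_def subt_def by (simp add: subst_vp)
      next
        case None
        show ?thesis
        proof (cases "l q = None")
          case True then show ?thesis using none None unfolding subt_def by (simp add: subst_novp)
        next
          case False
          have "\<not>(\<exists>q1 q2 x. q = q1@q2 \<and> l q1 = Some (Var x))" using None vp_None[of l q] by simp
          then have "\<forall>x. l q \<noteq> Some (Var x)"
          proof (intro allI notI)
            fix x assume nn: "\<not>(\<exists>q1 q2 x. q = q1@q2 \<and> l q1 = Some (Var x))" and "l q = Some (Var x)"
            then have "q = q@[] \<and> l q = Some (Var x)" by simp
            then show False using nn by blast
          qed
          then show ?thesis using agP False None unfolding subt_def by (simp add: subst_novp)
        qed
      qed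
    qed
    have t'p: "t' p \<noteq> None" using ag pPat patv[of "[]"] unfolding Q_def by (simp add: h(3))
    define t'' where "t'' = repl t' p (subst \<sigma>' r)"
    have rs: "rstep_at ar R p t' t''"
      unfolding rstep_at_def
      by (rule exI[of _ l], rule exI[of _ r], rule exI[of _ \<sigma>']) (use h(1) ws' t'p sub t''_def in simp)
    have wt'': "wf_pterm ar t''" using rstep_wf[OF trs rs wt'] .
    have agr: "t'' \<pi> = t1 \<pi>" if "\<pi> \<in> P" for \<pi>
    proof (cases "\<exists>q. \<pi> = p@q")
      case False
      then have "F \<pi> = \<pi>" unfolding F_def by simp
      moreover have "F \<pi> \<in> Q" unfolding Q_def using that by blast
      ultimately have "t' \<pi> = t0 \<pi>" using ag by metis
      then show ?thesis using False unfolding t''_def h(5) repl_def by simp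
    next
      case True
      then obtain q where q: "\<pi> = p@q" by blast
      show ?thesis
      proof (cases "var_prefix r q")
        case None then show ?thesis using q unfolding t''_def h(5) repl_def by (simp add: subst_novp)
      next
        case (Some a) then obtain q1 x where a: "var_prefix r q = Some (q1,x)" by (cases a) auto
        then obtain q2 where q2: "q = q1@q2" using vp_Some[OF a] by blast
        have vc: "t0 (p @ pos_of x @ q2) = subst \<sigma> r q" "x \<in> vars_of l" using var_case[OF a q2] by auto
        have "F \<pi> = p @ pos_of x @ q2" using q a q2 unfolding F_def by simp
        moreover have "F \<pi> \<in> Q" unfolding Q_def using that by blast
        ultimately have "t' (p @ pos_of x @ q2) = t0 (p @ pos_of x @ q2)" using ag by metis
        then show ?thesis using vc a q q2 unfolding t''_def h(5) repl_def \<sigma>'_def subt_def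
          by (simp add: subst_vp)
      qed
    qed
    show ?thesis using rs wt'' agr unfolding rstep_def by blast
  qed
  show ?thesis using finQ nbQ main by blast
qed

theorem proposition6p5:
  fixes ar :: "'f \<Rightarrow> nat"
    and R :: "(('f, 'v) pterm \<times> ('f, 'v) pterm) set"
    and \<alpha> :: "'i::wellorder"
    and ts :: "'i \<Rightarrow> ('f, 'v) pterm"
    and ps :: "'i \<Rightarrow> pos"
    and s t :: "('f, 'v) pterm"
    and P :: "pos set"
  assumes "trs ar R" and "left_linear R" and "left_finite R"
    and "strongly_p_converges ar R \<alpha> ts ps s t"
    and "finite P"
    and "\<forall>p\<in>P. t p \<noteq> None \<and> t p \<noteq> Some Bot"
  shows "\<exists>t'. (rstep ar R)\<^sup>*\<^sup>* s t' \<and> (\<forall>p\<in>P. t p = t' p)"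
proof -
  have s0: "ts ozero = s" and wfts: "\<forall>i\<le>\<alpha>. wf_pterm ar (ts i)"
    and steps: "\<forall>i<\<alpha>. rstep_at ar R (ps i) (ts i) (ts (osuc i))"
    and lims: "\<forall>lam\<le>\<alpha>. is_limit lam \<longrightarrow> liminf_is ar (\<lambda>i. ctx (ts i) (ps i)) lam (ts lam)"
    and tt: "t = ts \<alpha>"
    using assms(4) unfolding strongly_p_converges_def by auto
  have main: "\<gamma> \<le> \<alpha> \<longrightarrow> (\<forall>P. finite P \<longrightarrow> (\<forall>\<pi>\<in>P. ts \<gamma> \<pi> \<noteq> None \<and> ts \<gamma> \<pi> \<noteq> Some Bot) \<longrightarrow>
     (\<exists>t'. (rstep ar R)\<^sup>*\<^sup>* s t' \<and> wf_pterm ar t' \<and> (\<forall>\<pi>\<in>P. t' \<pi> = ts \<gamma> \<pi>)))" for \<gamma>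
  proof (induction \<gamma> rule: less_induct)
    case (less \<gamma>)
    show ?case
    proof (intro impI allI)
      fix P assume g: "\<gamma> \<le> \<alpha>" and fP: "finite P"
        and nb: "\<forall>\<pi>\<in>P. ts \<gamma> \<pi> \<noteq> None \<and> ts \<gamma> \<pi> \<noteq> Some Bot"
      have ws: "wf_pterm ar s" using wfts ozero_le[of \<alpha>] unfolding s0[symmetric] by blast
      consider (z) "\<gamma> = ozero" | (sc) \<delta> where "\<delta> < \<gamma>" "\<gamma> = osuc \<delta>" | (lm) "is_limit \<gamma>"
        using classify by blast
      then show "\<exists>t'. (rstep ar R)\<^sup>*\<^sup>* s t' \<and> wf_pterm ar t' \<and> (\<forall>\<pi>\<in>P. t' \<pi> = ts \<gamma> \<pi>)"
      proof cases
        case z then show ?thesis using s0 ws by auto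
      next
        case sc
        have da: "\<delta> < \<alpha>" using sc g by simp
        have st: "rstep_at ar R (ps \<delta>) (ts \<delta>) (ts \<gamma>)" using steps da sc by simp
        obtain Q where Q: "finite Q" "\<forall>\<pi>\<in>Q. ts \<delta> \<pi> \<noteq> None \<and> ts \<delta> \<pi> \<noteq> Some Bot"
          "\<forall>t'. wf_pterm ar t' \<and> (\<forall>\<pi>\<in>Q. t' \<pi> = ts \<delta> \<pi>) \<longrightarrow>
            (\<exists>t''. rstep ar R t' t'' \<and> wf_pterm ar t'' \<and> (\<forall>\<pi>\<in>P. t'' \<pi> = ts \<gamma> \<pi>))"
          using step_lemma[OF assms(1-3) _ st fP nb] wfts da by auto
        obtain t' where t': "(rstep ar R)\<^sup>*\<^sup>* s t'" "wf_pterm ar t'" "\<forall>\<pi>\<in>Q. t' \<pi> = ts \<delta> \<pi>"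
          using less.IH[OF sc(1)] da Q(1,2) by auto
        obtain t'' where "rstep ar R t' t''" "wf_pterm ar t''" "\<forall>\<pi>\<in>P. t'' \<pi> = ts \<gamma> \<pi>"
          using Q(3) t' by blast
        then show ?thesis using rtranclp.rtrancl_into_rtrancl[OF t'(1)] by blast
      next
        case lm
        have li: "liminf_is ar (\<lambda>i. ctx (ts i) (ps i)) \<gamma> (ts \<gamma>)" using lims g lm by auto
        have "\<exists>\<beta><\<gamma>. \<forall>i. \<beta> \<le> i \<and> i < \<gamma> \<longrightarrow> ts i \<pi> = ts \<gamma> \<pi>" if pP: "\<pi> \<in> P" for \<pi>
        proof -
          have n1: "ts \<gamma> \<pi> \<noteq> None" "ts \<gamma> \<pi> \<noteq> Some Bot" using nb pP by auto
          then obtain a where a: "ts \<gamma> \<pi> = Some a" "a \<noteq> Bot" by (cases "ts \<gamma> \<pi>") auto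
          obtain \<beta> where b1: "\<beta> < \<gamma>" and b2: "\<forall>i. \<beta> \<le> i \<and> i < \<gamma> \<longrightarrow> ctx (ts i) (ps i) \<pi> = Some a"
            using limit_lemma[OF li a] by blast
          have "\<forall>i. \<beta> \<le> i \<and> i < \<gamma> \<longrightarrow> ts i \<pi> = ts \<gamma> \<pi>"
          proof (intro allI impI)
            fix i assume "\<beta> \<le> i \<and> i < \<gamma>"
            then have "ctx (ts i) (ps i) \<pi> = Some a" using b2 by blast
            then show "ts i \<pi> = ts \<gamma> \<pi>" using ctx_val[OF _ a(2)] a(1) by metis
          qed
          then show ?thesis using b1 by blast
        qed
        then have "\<forall>\<pi>\<in>P. \<exists>\<beta>. \<beta> < \<gamma> \<and> (\<forall>i. \<beta> \<le> i \<and> i < \<gamma> \<longrightarrow> ts i \<pi> = ts \<gamma> \<pi>)" by blast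
        from bchoice[OF this] obtain \<beta> where \<beta>: "\<forall>\<pi>\<in>P. \<beta> \<pi> < \<gamma> \<and> (\<forall>i. \<beta> \<pi> \<le> i \<and> i < \<gamma> \<longrightarrow> ts i \<pi> = ts \<gamma> \<pi>)"
          by blast
        show ?thesis
        proof (cases "P = {}")
          case True then show ?thesis using ws by auto
        next
          case False
          define B where "B = Max (\<beta> ` P)"
          have BP: "B \<in> \<beta> ` P" unfolding B_def using False fP by simp
          then have Bg: "B < \<gamma>" using \<beta> by auto
          have ag: "ts B \<pi> = ts \<gamma> \<pi>" if "\<pi> \<in> P" for \<pi>
          proof -
            have "\<beta> \<pi> \<le> B" unfolding B_def using fP that by simp
            then show ?thesis using \<beta> that Bg by auto
          qed
          have "\<forall>\<pi>\<in>P. ts B \<pi> \<noteq> None \<and> ts B \<pi> \<noteq> Some Bot" using ag nb by simp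
          moreover have "B \<le> \<alpha>" using Bg g by simp
          ultimately obtain t' where "(rstep ar R)\<^sup>*\<^sup>* s t'" "wf_pterm ar t'" "\<forall>\<pi>\<in>P. t' \<pi> = ts B \<pi>"
            using less.IH[OF Bg] fP by blast
          then show ?thesis using ag by auto
        qed
      qed
    qed
  qed
  have "\<forall>\<pi>\<in>P. ts \<alpha> \<pi> \<noteq> None \<and> ts \<alpha> \<pi> \<noteq> Some Bot" using assms(6) tt by simp
  then obtain t' where "(rstep ar R)\<^sup>*\<^sup>* s t'" "\<forall>\<pi>\<in>P. t' \<pi> = ts \<alpha> \<pi>"
    using main[of \<alpha>] assms(5) by blast
  then show ?thesis using tt by auto
qed

end
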